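(* Let $Z_1,\ldots,Z_{n+1}$ be i.i.d. from an arbitrary distribution $\mathcal P$, let $V$ be a fixed score function and $\alpha\in(0,1)$. Fix a grid $0\le a_1<\cdots<a_M\le 1$ and let $\tilde\alpha$ be the smallest grid value $a_m$ such that, with $\tilde\alpha=a_m$, either $\bar v^*:=Q(\tilde\alpha;\hat{\mathcal F})=\infty$ or condition (G2) holds (assume such a grid value always exists, e.g. $a_M=1$). Let $\widehat C(X_{n+1})=\{y\in\mathbb R: V(X_{n+1},y)\le Q(\tilde\alpha;\hat{\mathcal F})\}$. Then $\mathbb P\{Y_{n+1}\in\widehat C(X_{n+1})\}\ge\alpha$.
   Context: Data: $Z_i=(X_i,Y_i)\in\mathbb R^p\times\mathbb R$, $i=1,\ldots,n+1$; $X=\{X_1,\ldots,X_{n+1}\}$ (unordered). A localizer is a function $H(x_1,x_2,X)\in[0,1]$ of $x_1,x_2\in\mathbb R^p$ and of the unordered set $X$, satisfying $H(x,x,X)=1$ for all $x$. Write $H_{i,j}=H(X_i,X_j,X)$ and $p^H_{i,j}=H_{i,j}/\sum_{k=1}^{n+1}H_{i,k}$. For a probability distribution $\mathcal F$ on $\mathbb R\cup\{\infty\}$ and $a\in[0,1]$, $Q(a;\mathcal F)=\inf\{t:\mathbb P_{T\sim\mathcal F}(T\le t)\ge a\}$; $\delta_v$ denotes the point mass at $v$. A fixed score function is a deterministic measurable $V:\mathbb R^p\times\mathbb R\to[0,\infty)$ not depending on the data; $V_i=V(Z_i)$. Define $\hat{\mathcal F}=\sum_{j=1}^{n}p^H_{n+1,j}\delta_{V_j}+p^H_{n+1,n+1}\delta_{\infty}$.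 For a level $\tilde\alpha$, let $v^*_{i1}=Q(\tilde\alpha;\sum_{j=1}^n p^H_{i,j}\delta_{V_j}+p^H_{i,n+1}\delta_{\bar v^*})$ and $v^*_{i2}=Q(\tilde\alpha;\sum_{j=1}^n p^H_{i,j}\delta_{V_j}+p^H_{i,n+1}\delta_{0})$ for $i=1,\ldots,n$. Condition (G2): $\frac{1}{n+1}\sum_{i=1}^n\mathbb 1\{V_i\le v^*_{i1}\}\ge\alpha$ and $\frac{1}{n+1}\sum_{i=1}^n\mathbb 1\{V_i\le v^*_{i2}\}+\frac{1}{n+1}\ge\alpha$. *)

theory Defs
  imports "HOL-Probability.Probability" "HOL-Library.Multiset"
begin

text \<open>Finite discrete distributions on the extended reals, given by an index set I,
  weights w and atoms v: the distribution sum over j in I of w j times delta at v j.\<close>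

definition wcdf :: "'i set \<Rightarrow> ('i \<Rightarrow> real) \<Rightarrow> ('i \<Rightarrow> ereal) \<Rightarrow> ereal \<Rightarrow> real" where
  "wcdf I w v t = (\<Sum>j\<in>I. if v j \<le> t then w j else 0)"

definition Qf :: "real \<Rightarrow> 'i set \<Rightarrow> ('i \<Rightarrow> real) \<Rightarrow> ('i \<Rightarrow> ereal) \<Rightarrow> ereal" where
  "Qf a I w v = Inf {t. a \<le> wcdf I w v t}"

definition is_localizer :: "('x \<Rightarrow> 'x \<Rightarrow> 'x multiset \<Rightarrow> real) \<Rightarrow> bool" where
  "is_localizer H \<longleftrightarrow> (\<forall>x1 x2 X. 0 \<le> H x1 x2 X \<and> H x1 x2 X \<le> 1) \<and> (\<forall>x X. H x x X = 1)"

text \<open>The data are \<omega> i = Z_i = (X_i, Y_i), i = 1..n+1.\<close>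
definition sampleX :: "nat \<Rightarrow> (nat \<Rightarrow> 'x \<times> real) \<Rightarrow> 'x multiset" where
  "sampleX n \<omega> = image_mset (\<lambda>k. fst (\<omega> k)) (mset_set {1..n+1})"

definition Hm :: "('x \<Rightarrow> 'x \<Rightarrow> 'x multiset \<Rightarrow> real) \<Rightarrow> nat \<Rightarrow> (nat \<Rightarrow> 'x \<times> real) \<Rightarrow> nat \<Rightarrow> nat \<Rightarrow> real" where
  "Hm H n \<omega> i j = H (fst (\<omega> i)) (fst (\<omega> j)) (sampleX n \<omega>)"

definition pH :: "('x \<Rightarrow> 'x \<Rightarrow> 'x multiset \<Rightarrow> real) \<Rightarrow> nat \<Rightarrow> (nat \<Rightarrow> 'x \<times> real) \<Rightarrow> nat \<Rightarrow> nat \<Rightarrow> real" where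
  "pH H n \<omega> i j = Hm H n \<omega> i j / (\<Sum>k\<in>{1..n+1}. Hm H n \<omega> i k)"

text \<open>vbar = Q(a; Fhat), Fhat = sum_{j<=n} pH_{n+1,j} delta_{V_j} + pH_{n+1,n+1} delta_inf.\<close>
definition vbar :: "('x \<Rightarrow> 'x \<Rightarrow> 'x multiset \<Rightarrow> real) \<Rightarrow> ('x \<times> real \<Rightarrow> real) \<Rightarrow> nat \<Rightarrow> (nat \<Rightarrow> 'x \<times> real) \<Rightarrow> real \<Rightarrow> ereal" where
  "vbar H V n \<omega> a = Qf a {1..n+1} (pH H n \<omega> (n+1))
      (\<lambda>j. if j = n+1 then \<infinity> else ereal (V (\<omega> j)))"

definition v1 :: "('x \<Rightarrow> 'x \<Rightarrow> 'x multiset \<Rightarrow> real) \<Rightarrow> ('x \<times> real \<Rightarrow> real) \<Rightarrow> nat \<Rightarrow> (nat \<Rightarrow> 'x \<times> real) \<Rightarrow> real \<Rightarrow> nat \<Rightarrow> ereal" where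
  "v1 H V n \<omega> a i = Qf a {1..n+1} (pH H n \<omega> i)
      (\<lambda>j. if j = n+1 then vbar H V n \<omega> a else ereal (V (\<omega> j)))"

definition v2 :: "('x \<Rightarrow> 'x \<Rightarrow> 'x multiset \<Rightarrow> real) \<Rightarrow> ('x \<times> real \<Rightarrow> real) \<Rightarrow> nat \<Rightarrow> (nat \<Rightarrow> 'x \<times> real) \<Rightarrow> real \<Rightarrow> nat \<Rightarrow> ereal" where
  "v2 H V n \<omega> a i = Qf a {1..n+1} (pH H n \<omega> i)
      (\<lambda>j. if j = n+1 then 0 else ereal (V (\<omega> j)))"

definition G2 :: "('x \<Rightarrow> 'x \<Rightarrow> 'x multiset \<Rightarrow> real) \<Rightarrow> ('x \<times> real \<Rightarrow> real) \<Rightarrow> nat \<Rightarrow> real \<Rightarrow> (nat \<Rightarrow> 'x \<times> real) \<Rightarrow> real \<Rightarrow> bool" where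
  "G2 H V n \<alpha> \<omega> a \<longleftrightarrow>
     real (card {i\<in>{1..n}. ereal (V (\<omega> i)) \<le> v1 H V n \<omega> a i}) / real (n+1) \<ge> \<alpha> \<and>
     real (card {i\<in>{1..n}. ereal (V (\<omega> i)) \<le> v2 H V n \<omega> a i}) / real (n+1) + 1 / real (n+1) \<ge> \<alpha>"

definition admissible :: "('x \<Rightarrow> 'x \<Rightarrow> 'x multiset \<Rightarrow> real) \<Rightarrow> ('x \<times> real \<Rightarrow> real) \<Rightarrow> nat \<Rightarrow> real \<Rightarrow> (nat \<Rightarrow> 'x \<times> real) \<Rightarrow> real \<Rightarrow> bool" where
  "admissible H V n \<alpha> \<omega> a \<longleftrightarrow> vbar H V n \<omega> a = \<infinity> \<or> G2 H V n \<alpha> \<omega> a"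

definition alpha_tilde :: "('x \<Rightarrow> 'x \<Rightarrow> 'x multiset \<Rightarrow> real) \<Rightarrow> ('x \<times> real \<Rightarrow> real) \<Rightarrow> nat \<Rightarrow> real \<Rightarrow> (nat \<Rightarrow> real) \<Rightarrow> nat \<Rightarrow> (nat \<Rightarrow> 'x \<times> real) \<Rightarrow> real" where
  "alpha_tilde H V n \<alpha> agrid M \<omega> =
     agrid (LEAST m. m \<in> {1..M} \<and> admissible H V n \<alpha> \<omega> (agrid m))"

definition conf_set :: "('x \<Rightarrow> 'x \<Rightarrow> 'x multiset \<Rightarrow> real) \<Rightarrow> ('x \<times> real \<Rightarrow> real) \<Rightarrow> nat \<Rightarrow> real \<Rightarrow> (nat \<Rightarrow> real) \<Rightarrow> nat \<Rightarrow> (nat \<Rightarrow> 'x \<times> real) \<Rightarrow> real set" where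
  "conf_set H V n \<alpha> agrid M \<omega> =
     {y. ereal (V (fst (\<omega> (n+1)), y)) \<le> vbar H V n \<omega> (alpha_tilde H V n \<alpha> agrid M \<omega>)}"

end

theory Submission
  imports Defs
begin

lemma wcdf_mono_t:
  assumes "\<forall>j\<in>I. 0 \<le> w j" "s \<le> t"
  shows "wcdf I w v s \<le> wcdf I w v t"
  unfolding wcdf_def using assms by (intro sum_mono) (auto intro: order_trans)

lemma wcdf_mono_v:
  assumes "\<forall>j\<in>I. 0 \<le> w j" "\<forall>j\<in>I. v j \<le> v' j"
  shows "wcdf I w v' t \<le> wcdf I w v t"
  unfolding wcdf_def using assms by (intro sum_mono) (auto intro: order_trans)

lemma Qf_mono_v:
  assumes "\<forall>j\<in>I. 0 \<le> w j" "\<forall>j\<in>I. v j \<le> v' j"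
  shows "Qf a I w v \<le> Qf a I w v'"
  unfolding Qf_def
proof (rule Inf_superset_mono, safe)
  fix t assume "a \<le> wcdf I w v' t"
  then show "a \<le> wcdf I w v t" using wcdf_mono_v[OF assms, of t] by linarith
qed

lemma Qf_mono_a:
  assumes "a \<le> a'"
  shows "Qf a I w v \<le> Qf a' I w v"
  unfolding Qf_def using assms by (intro Inf_superset_mono) auto

lemma wcdf_top: "wcdf I w v \<infinity> = sum w I"
  unfolding wcdf_def by simp

lemma Qf_attained:
  assumes "finite I" "\<forall>j\<in>I. 0 \<le> w j" "a \<le> sum w I"
  shows "a \<le> wcdf I w v (Qf a I w v)"
proof -
  define S where "S = {t. a \<le> wcdf I w v t}"
  define s where "s = Inf S"
  have topS: "\<infinity> \<in> S" using assms(3) by (simp add: S_def wcdf_top)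
  obtain t where tS: "t \<in> S" and st: "s \<le> t" and tj: "\<forall>j\<in>I. v j \<le> t \<longrightarrow> v j \<le> s"
  proof (cases "{v j |j. j \<in> I \<and> s < v j} = {}")
    case True
    show ?thesis
      apply (rule that[OF topS])
      using True by (auto simp: not_le)
  next
    case False
    define m where "m = Min {v j |j. j \<in> I \<and> s < v j}"
    have fin: "finite {v j |j. j \<in> I \<and> s < v j}" using assms(1) by simp
    have "m \<in> {v j |j. j \<in> I \<and> s < v j}" unfolding m_def using fin False by (rule Min_in)
    then have "s < m" by auto
    then obtain t where "t \<in> S" "t < m" unfolding s_def by (auto simp: Inf_less_iff)
    moreover have "s \<le> t" using \<open>t \<in> S\<close> unfolding s_def by (simp add: Inf_lower)
    moreover have "\<forall>j\<in>I. v j \<le> t \<longrightarrow> v j \<le> s"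
    proof (intro ballI impI)
      fix j assume j: "j \<in> I" "v j \<le> t"
      show "v j \<le> s"
      proof (rule ccontr)
        assume "\<not> v j \<le> s"
        then have "v j \<in> {v j |j. j \<in> I \<and> s < v j}" using j by auto
        then have "m \<le> v j" unfolding m_def using fin by simp
        then show False using j \<open>t < m\<close> by simp
      qed
    qed
    ultimately show ?thesis using that by blast
  qed
  have "wcdf I w v t = wcdf I w v s"
    unfolding wcdf_def using tj st by (intro sum.cong) (auto intro: order_trans)
  then show ?thesis using tS unfolding S_def s_def Qf_def by simp
qed

lemma Qf_le_iff:
  assumes "finite I" "\<forall>j\<in>I. 0 \<le> w j" "a \<le> sum w I"
  shows "Qf a I w v \<le> t \<longleftrightarrow> a \<le> wcdf I w v t"
proof
  assume "Qf a I w v \<le> t"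
  then show "a \<le> wcdf I w v t"
    using Qf_attained[OF assms, of v] wcdf_mono_t[OF assms(2)] by (meson order_trans)
next
  assume "a \<le> wcdf I w v t"
  then show "Qf a I w v \<le> t" unfolding Qf_def by (simp add: Inf_lower)
qed

lemma Qf_reindex:
  assumes "bij_betw \<sigma> I I"
  shows "Qf a I (\<lambda>j. w (\<sigma> j)) (\<lambda>j. v (\<sigma> j)) = Qf a I w v"
proof -
  have "wcdf I (\<lambda>j. w (\<sigma> j)) (\<lambda>j. v (\<sigma> j)) t = wcdf I w v t" for t
    unfolding wcdf_def using sum.reindex_bij_betw[OF assms, of "\<lambda>j. if v j \<le> t then w j else 0"]
    by simp
  then show ?thesis unfolding Qf_def by simp
qed

lemma Qf_meas:
  assumes "finite I" "\<forall>x\<in>space M. \<forall>j\<in>I. 0 \<le> w x j" "\<forall>x\<in>space M. a \<le> sum (w x) I"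
    and "\<And>j. j \<in> I \<Longrightarrow> (\<lambda>x. w x j) \<in> borel_measurable M"
    and "\<And>j. j \<in> I \<Longrightarrow> (\<lambda>x. v x j) \<in> borel_measurable M"
  shows "(\<lambda>x. Qf a I (w x) (v x)) \<in> borel_measurable M"
proof (rule borel_measurableI_le)
  fix y :: ereal
  have "{x\<in>space M. Qf a I (w x) (v x) \<le> y} = {x\<in>space M. a \<le> wcdf I (w x) (v x) y}"
    using Qf_le_iff[OF assms(1)] assms(2,3) by auto
  also have "\<dots> \<in> sets M"
  proof -
    have "(\<lambda>x. wcdf I (w x) (v x) y) \<in> borel_measurable M"
      unfolding wcdf_def
    proof (rule borel_measurable_sum)
      fix j assume j: "j \<in> I"
      note [measurable] = assms(4)[OF j] assms(5)[OF j]
      show "(\<lambda>x. if v x j \<le> y then w x j else 0) \<in> borel_measurable M" by measurable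
    qed
    then show ?thesis by measurable
  qed
  finally show "{x\<in>space M. Qf a I (w x) (v x) \<le> y} \<in> sets M" .
qed


lemma Qf_cong:
  assumes "\<forall>j\<in>I. w j = w' j \<and> v j = v' j"
  shows "Qf a I w v = Qf a I w' v'"
proof -
  have "wcdf I w v t = wcdf I w' v' t" for t
    unfolding wcdf_def using assms by (intro sum.cong) auto
  then show ?thesis unfolding Qf_def by simp
qed

lemma Qf_ge_iff:
  assumes "finite I" "\<forall>j\<in>I. 0 \<le> w j" "a \<le> sum w I"
  shows "x \<le> Qf a I w v \<longleftrightarrow> (\<forall>t<x. wcdf I w v t < a)"
proof
  assume x: "x \<le> Qf a I w v"
  show "\<forall>t<x. wcdf I w v t < a"
  proof (intro allI impI)
    fix t assume "t < x"
    show "wcdf I w v t < a"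
    proof (rule ccontr)
      assume "\<not> wcdf I w v t < a"
      then have "Qf a I w v \<le> t" using Qf_le_iff[OF assms] by simp
      then show False using x \<open>t < x\<close> by simp
    qed
  qed
next
  assume h: "\<forall>t<x. wcdf I w v t < a"
  show "x \<le> Qf a I w v"
  proof (rule ccontr)
    assume "\<not> x \<le> Qf a I w v"
    then have "Qf a I w v < x" by simp
    then have "wcdf I w v (Qf a I w v) < a" using h by simp
    then show False using Qf_attained[OF assms, of v] by simp
  qed
qed

lemma Qf_swap_atom:
  assumes "finite I" "\<forall>j\<in>I. 0 \<le> w j" "a \<le> sum w I"
    and "\<forall>j\<in>I-{jz}. v j = v' j" "x \<le> v jz" "x \<le> v' jz"
  shows "x \<le> Qf a I w v \<longleftrightarrow> x \<le> Qf a I w v'"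
proof -
  have "wcdf I w v t = wcdf I w v' t" if "t < x" for t
    unfolding wcdf_def
  proof (intro sum.cong refl)
    fix j assume "j \<in> I"
    show "(if v j \<le> t then w j else 0) = (if v' j \<le> t then w j else 0)"
    proof (cases "j = jz")
      case True
      then show ?thesis using assms(5,6) that by (auto simp: not_le intro: less_le_trans)
    next
      case False
      then show ?thesis using assms(4) \<open>j \<in> I\<close> by auto
    qed
  qed
  then show ?thesis using Qf_ge_iff[OF assms(1-3)] by simp
qed

lemma card_filter_real:
  assumes "finite S"
  shows "real (card {k\<in>S. Q k}) = (\<Sum>k\<in>S. if Q k then 1 else 0)"
  using sum.inter_filter[OF assms, of "\<lambda>_. 1::real" Q] by simp

locale cp =
  fixes P :: "('x::euclidean_space \<times> real) measure"
    and V :: "'x \<times> real \<Rightarrow> real"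
    and H :: "'x \<Rightarrow> 'x \<Rightarrow> 'x multiset \<Rightarrow> real"
    and n M :: nat and \<alpha> :: real and agrid :: "nat \<Rightarrow> real"
  assumes P: "prob_space P" and sP: "sets P = sets borel"
    and Vm: "V \<in> borel_measurable borel" and Vnn: "\<forall>z. 0 \<le> V z"
    and loc: "is_localizer H"
    and Hmeas: "\<forall>i\<in>{1..n+1}. \<forall>j\<in>{1..n+1}.
           (\<lambda>\<omega>. Hm H n \<omega> i j) \<in> borel_measurable (PiM {1..n+1} (\<lambda>_. P))"
    and a0: "0 < \<alpha>" and a1: "\<alpha> < 1"
    and M1: "1 \<le> M" and smono: "strict_mono_on {1..M} agrid" and g0: "0 \<le> agrid 1" and gM: "agrid M \<le> 1"
    and adm: "\<forall>\<omega>\<in>space (PiM {1..n+1} (\<lambda>_. P)). \<exists>m\<in>{1..M}. admissible H V n \<alpha> \<omega> (agrid m)"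
begin

abbreviation "J \<equiv> {1..n+1::nat}"
abbreviation "PP \<equiv> PiM J (\<lambda>_. P)"

definition "Fq a \<omega> k = Qf a J (pH H n \<omega> k) (\<lambda>j. ereal (V (\<omega> j)))"
definition "cnt a \<omega> = card {k\<in>J. ereal (V (\<omega> k)) \<le> Fq a \<omega> k}"
definition "good a \<omega> \<longleftrightarrow> \<alpha> * real (n+1) \<le> real (cnt a \<omega>)"
definition "exg \<omega> \<longleftrightarrow> (\<exists>m\<in>{1..M}. good (agrid m) \<omega>)"
definition "Lg \<omega> = (LEAST m. m \<in> {1..M} \<and> good (agrid m) \<omega>)"
definition "Gi \<omega> k \<longleftrightarrow> (exg \<omega> \<longrightarrow> ereal (V (\<omega> k)) \<le> Fq (agrid (Lg \<omega>)) \<omega> k)"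

lemma Hm_bounds: "0 \<le> Hm H n \<omega> i j" "Hm H n \<omega> i j \<le> 1" "Hm H n \<omega> i i = 1"
  using loc unfolding is_localizer_def Hm_def by auto

lemma pH_nonneg: "0 \<le> pH H n \<omega> i j"
proof -
  have "0 \<le> sum (Hm H n \<omega> i) J" by (rule sum_nonneg) (rule Hm_bounds)
  then show ?thesis unfolding pH_def using Hm_bounds(1)[of \<omega> i j] by (simp add: divide_nonneg_nonneg)
qed

lemma Vnn': "0 \<le> V z" using Vnn by blast

lemma pH_sum: assumes "i \<in> J" shows "sum (pH H n \<omega> i) J = 1"
proof -
  have "(\<Sum>k\<in>J. Hm H n \<omega> i k) \<ge> Hm H n \<omega> i i"
    using assms Hm_bounds by (intro member_le_sum) auto
  then have "(\<Sum>k\<in>J. Hm H n \<omega> i k) \<noteq> 0" using Hm_bounds by auto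
  then show ?thesis unfolding pH_def by (simp add: sum_divide_distrib[symmetric])
qed

lemma wts: assumes "i \<in> J" "a \<le> 1"
  shows "finite J" "\<forall>j\<in>J. 0 \<le> pH H n \<omega> i j" "a \<le> sum (pH H n \<omega> i) J"
  using pH_nonneg pH_sum[OF assms(1)] assms(2) by auto

lemma grid: assumes "m \<in> {1..M}" shows "0 \<le> agrid m" "agrid m \<le> 1"
proof -
  have mo: "mono_on {1..M} agrid" using smono by (rule strict_mono_on_imp_mono_on)
  show "0 \<le> agrid m" using mono_onD[OF mo, of 1 m] assms M1 g0 by auto
  show "agrid m \<le> 1" using mono_onD[OF mo, of m M] assms M1 gM by auto
qed

lemma grid_mono: assumes "m \<in> {1..M}" "m' \<in> {1..M}" "m \<le> m'" shows "agrid m \<le> agrid m'"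
  using mono_onD[OF strict_mono_on_imp_mono_on[OF smono]] assms by auto

lemma cover_equiv: assumes "a \<le> 1"
  shows "ereal (V (\<omega> (n+1))) \<le> vbar H V n \<omega> a \<longleftrightarrow> ereal (V (\<omega> (n+1))) \<le> Fq a \<omega> (n+1)"
  unfolding vbar_def Fq_def
proof (rule Qf_swap_atom[where jz="n+1"])
  have nJ: "n+1 \<in> J" by simp
  show "finite J" by simp
  show "\<forall>j\<in>J. 0 \<le> pH H n \<omega> (n+1) j" using pH_nonneg by blast
  show "a \<le> sum (pH H n \<omega> (n+1)) J" using pH_sum[OF nJ, of \<omega>] assms by linarith
qed (auto simp: Vnn')

lemma good_of_G2: assumes "a \<le> 1" "G2 H V n \<alpha> \<omega> a" shows "good a \<omega>"
proof -
  let ?S = "{k\<in>{1..n}. ereal (V (\<omega> k)) \<le> Fq a \<omega> k}"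
  have Jeq: "J = insert (n+1) {1..n}" by auto
  have cntS: "real (cnt a \<omega>) \<ge> real (card ?S)"
    unfolding cnt_def by (intro of_nat_mono card_mono) auto
  have fv: "Fq a \<omega> i = Qf a J (pH H n \<omega> i) (\<lambda>j. ereal (V (\<omega> j)))" for i
    by (simp add: Fq_def)
  show ?thesis
  proof (cases "ereal (V (\<omega> (n+1))) \<le> vbar H V n \<omega> a")
    case True
    then have c1: "ereal (V (\<omega> (n+1))) \<le> Fq a \<omega> (n+1)" using cover_equiv[OF assms(1)] by simp
    have "{k\<in>J. ereal (V (\<omega> k)) \<le> Fq a \<omega> k} = insert (n+1) ?S" using c1 by auto
    then have ceq: "cnt a \<omega> = card ?S + 1" unfolding cnt_def by simp
    have sub: "{i\<in>{1..n}. ereal (V (\<omega> i)) \<le> v2 H V n \<omega> a i} \<subseteq> ?S"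
    proof safe
      fix i assume i: "i \<in> {1..n}" "ereal (V (\<omega> i)) \<le> v2 H V n \<omega> a i"
      have "v2 H V n \<omega> a i \<le> Fq a \<omega> i"
        unfolding v2_def Fq_def using Vnn' pH_nonneg by (intro Qf_mono_v) auto
      then show "ereal (V (\<omega> i)) \<le> Fq a \<omega> i" using i by simp
    qed
    have "real (card {i\<in>{1..n}. ereal (V (\<omega> i)) \<le> v2 H V n \<omega> a i}) \<le> real (card ?S)"
      using sub by (intro of_nat_mono card_mono) auto
    moreover have "\<alpha> \<le> real (card {i\<in>{1..n}. ereal (V (\<omega> i)) \<le> v2 H V n \<omega> a i}) / real (n+1) + 1 / real (n+1)"
      using assms(2) unfolding G2_def by simp
    ultimately have "\<alpha> * real (n+1) \<le> real (card ?S) + 1"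
      by (simp add: field_simps add_divide_distrib[symmetric])
    then show ?thesis unfolding good_def ceq by simp
  next
    case False
    then have vl: "vbar H V n \<omega> a \<le> ereal (V (\<omega> (n+1)))" by simp
    have sub: "{i\<in>{1..n}. ereal (V (\<omega> i)) \<le> v1 H V n \<omega> a i} \<subseteq> ?S"
    proof safe
      fix i assume i: "i \<in> {1..n}" "ereal (V (\<omega> i)) \<le> v1 H V n \<omega> a i"
      have "v1 H V n \<omega> a i \<le> Fq a \<omega> i"
        unfolding v1_def Fq_def using vl pH_nonneg by (intro Qf_mono_v) auto
      then show "ereal (V (\<omega> i)) \<le> Fq a \<omega> i" using i by simp
    qed
    have "real (card {i\<in>{1..n}. ereal (V (\<omega> i)) \<le> v1 H V n \<omega> a i}) \<le> real (card ?S)"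
      using sub by (intro of_nat_mono card_mono) auto
    moreover have "\<alpha> \<le> real (card {i\<in>{1..n}. ereal (V (\<omega> i)) \<le> v1 H V n \<omega> a i}) / real (n+1)"
      using assms(2) unfolding G2_def by simp
    ultimately have "\<alpha> * real (n+1) \<le> real (card ?S)"
      by (simp add: field_simps)
    then show ?thesis unfolding good_def using cntS by simp
  qed
qed


lemma Gi_cover:
  assumes "Gi \<omega> (n+1)" "\<exists>m\<in>{1..M}. admissible H V n \<alpha> \<omega> (agrid m)"
  shows "snd (\<omega> (n+1)) \<in> conf_set H V n \<alpha> agrid M \<omega>"
proof -
  define m0 where "m0 = (LEAST m. m \<in> {1..M} \<and> admissible H V n \<alpha> \<omega> (agrid m))"
  have ex0: "\<exists>m. m \<in> {1..M} \<and> admissible H V n \<alpha> \<omega> (agrid m)" using assms(2) by blast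
  have "m0 \<in> {1..M} \<and> admissible H V n \<alpha> \<omega> (agrid m0)"
    unfolding m0_def using ex0 by (rule LeastI_ex)
  then have m0: "m0 \<in> {1..M}" "admissible H V n \<alpha> \<omega> (agrid m0)" by auto
  have at: "alpha_tilde H V n \<alpha> agrid M \<omega> = agrid m0" unfolding alpha_tilde_def m0_def ..
  have g1: "agrid m0 \<le> 1" using grid m0 by simp
  have "ereal (V (\<omega> (n+1))) \<le> vbar H V n \<omega> (agrid m0)"
  proof (cases "vbar H V n \<omega> (agrid m0) = \<infinity>")
    case True then show ?thesis by simp
  next
    case False
    then have "G2 H V n \<alpha> \<omega> (agrid m0)" using m0 unfolding admissible_def by simp
    then have gd: "good (agrid m0) \<omega>" using good_of_G2 g1 by simp
    then have ex: "exg \<omega>" unfolding exg_def using m0 by auto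
    have Lle: "Lg \<omega> \<le> m0" unfolding Lg_def using m0 gd by (intro Least_le) simp
    have L: "Lg \<omega> \<in> {1..M}"
      using LeastI[of "\<lambda>m. m \<in> {1..M} \<and> good (agrid m) \<omega>" m0] m0 gd unfolding Lg_def by auto
    have "ereal (V (\<omega> (n+1))) \<le> Fq (agrid (Lg \<omega>)) \<omega> (n+1)" using assms(1) ex unfolding Gi_def by simp
    also have "\<dots> \<le> Fq (agrid m0) \<omega> (n+1)"
      unfolding Fq_def by (intro Qf_mono_a grid_mono L m0 Lle)
    finally show ?thesis using cover_equiv[OF g1] by simp
  qed
  then show ?thesis unfolding conf_set_def at by simp
qed

lemma Gi_count:
  shows "\<alpha> * real (n+1) \<le> real (card {k\<in>J. Gi \<omega> k})"
proof (cases "exg \<omega>")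
  case True
  then obtain m where m: "m \<in> {1..M}" "good (agrid m) \<omega>" unfolding exg_def by auto
  have "Lg \<omega> \<in> {1..M} \<and> good (agrid (Lg \<omega>)) \<omega>"
    unfolding Lg_def by (rule LeastI[of _ m]) (use m in simp)
  then have "good (agrid (Lg \<omega>)) \<omega>" by simp
  moreover have "{k\<in>J. Gi \<omega> k} = {k\<in>J. ereal (V (\<omega> k)) \<le> Fq (agrid (Lg \<omega>)) \<omega> k}"
    using True unfolding Gi_def by simp
  ultimately show ?thesis unfolding good_def cnt_def by simp
next
  case False
  then have "{k\<in>J. Gi \<omega> k} = J" unfolding Gi_def by auto
  then show ?thesis using a1 by simp
qed

section \<open>Permutation invariance\<close>

lemma sampleX_perm:
  assumes bij: "bij_betw \<sigma> J J" and om: "\<forall>k\<in>J. \<omega>' k = \<omega> (\<sigma> k)"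
  shows "sampleX n \<omega>' = sampleX n \<omega>"
proof -
  have "sampleX n \<omega>' = image_mset (\<lambda>k. fst (\<omega> (\<sigma> k))) (mset_set J)"
    unfolding sampleX_def using om by (intro image_mset_cong) simp
  also have "\<dots> = image_mset (\<lambda>k. fst (\<omega> k)) (image_mset \<sigma> (mset_set J))"
    by (simp add: multiset.map_comp o_def)
  also have "image_mset \<sigma> (mset_set J) = mset_set J"
    using bij by (simp add: image_mset_mset_set bij_betw_def)
  finally show ?thesis unfolding sampleX_def .
qed

lemma Hm_perm:
  assumes bij: "bij_betw \<sigma> J J" and om: "\<forall>k\<in>J. \<omega>' k = \<omega> (\<sigma> k)" and "i \<in> J" "j \<in> J"
  shows "Hm H n \<omega>' i j = Hm H n \<omega> (\<sigma> i) (\<sigma> j)"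
  unfolding Hm_def sampleX_perm[OF bij om] using om assms by simp

lemma pH_perm:
  assumes bij: "bij_betw \<sigma> J J" and om: "\<forall>k\<in>J. \<omega>' k = \<omega> (\<sigma> k)" and "i \<in> J" "j \<in> J"
  shows "pH H n \<omega>' i j = pH H n \<omega> (\<sigma> i) (\<sigma> j)"
proof -
  have "(\<Sum>l\<in>J. Hm H n \<omega>' i l) = (\<Sum>l\<in>J. Hm H n \<omega> (\<sigma> i) (\<sigma> l))"
    using Hm_perm[OF bij om \<open>i\<in>J\<close>] by simp
  also have "\<dots> = (\<Sum>l\<in>J. Hm H n \<omega> (\<sigma> i) l)"
    using sum.reindex_bij_betw[OF bij, of "Hm H n \<omega> (\<sigma> i)"] by simp
  finally show ?thesis unfolding pH_def using Hm_perm[OF bij om assms(3,4)] by simp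
qed

lemma Fq_perm:
  assumes bij: "bij_betw \<sigma> J J" and om: "\<forall>k\<in>J. \<omega>' k = \<omega> (\<sigma> k)" and "k \<in> J"
  shows "Fq a \<omega>' k = Fq a \<omega> (\<sigma> k)"
proof -
  have "Fq a \<omega>' k = Qf a J (\<lambda>j. pH H n \<omega> (\<sigma> k) (\<sigma> j)) (\<lambda>j. ereal (V (\<omega> (\<sigma> j))))"
    unfolding Fq_def using pH_perm[OF bij om \<open>k\<in>J\<close>] om by (intro Qf_cong) simp
  also have "\<dots> = Fq a \<omega> (\<sigma> k)"
    unfolding Fq_def by (rule Qf_reindex[OF bij])
  finally show ?thesis .
qed

lemma card_perm:
  assumes bij: "bij_betw \<sigma> J J"
  shows "card {k\<in>J. Q (\<sigma> k)} = card {k\<in>J. Q k}"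
proof -
  have inj0: "inj_on \<sigma> J" and im: "\<sigma> ` J = J" using bij unfolding bij_betw_def by auto
  have inj: "inj_on \<sigma> {k\<in>J. Q (\<sigma> k)}" using inj0 by (rule inj_on_subset) blast
  have "\<sigma> ` {k\<in>J. Q (\<sigma> k)} = {k\<in>J. Q k}"
  proof (rule set_eqI, rule iffI)
    fix x assume "x \<in> \<sigma> ` {k\<in>J. Q (\<sigma> k)}"
    then obtain y where "y \<in> J" "Q (\<sigma> y)" "x = \<sigma> y" by blast
    then show "x \<in> {k\<in>J. Q k}" using im by blast
  next
    fix x assume x: "x \<in> {k\<in>J. Q k}"
    then have "x \<in> \<sigma> ` J" using im by simp
    then obtain y where "y \<in> J" "x = \<sigma> y" by blast
    then show "x \<in> \<sigma> ` {k\<in>J. Q (\<sigma> k)}" using x by blast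
  qed
  then show ?thesis using card_image[OF inj] by simp
qed

lemma cnt_perm:
  assumes bij: "bij_betw \<sigma> J J" and om: "\<forall>k\<in>J. \<omega>' k = \<omega> (\<sigma> k)"
  shows "cnt a \<omega>' = cnt a \<omega>"
proof -
  have "{k\<in>J. ereal (V (\<omega>' k)) \<le> Fq a \<omega>' k} = {k\<in>J. ereal (V (\<omega> (\<sigma> k))) \<le> Fq a \<omega> (\<sigma> k)}"
    using om Fq_perm[OF bij om] by auto
  then show ?thesis unfolding cnt_def
    using card_perm[OF bij, of "\<lambda>k. ereal (V (\<omega> k)) \<le> Fq a \<omega> k"] by simp
qed

lemma Gi_perm:
  assumes bij: "bij_betw \<sigma> J J" and om: "\<forall>k\<in>J. \<omega>' k = \<omega> (\<sigma> k)" and "k \<in> J"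
  shows "Gi \<omega>' k = Gi \<omega> (\<sigma> k)"
proof -
  have gd: "good a \<omega>' = good a \<omega>" for a unfolding good_def cnt_perm[OF bij om] ..
  have "exg \<omega>' = exg \<omega>" "Lg \<omega>' = Lg \<omega>" unfolding exg_def Lg_def gd by simp_all
  then show ?thesis unfolding Gi_def using om Fq_perm[OF bij om \<open>k\<in>J\<close>] \<open>k\<in>J\<close> by simp
qed


section \<open>Measurability\<close>

lemma pred_le_meas:
  fixes f g :: "'a \<Rightarrow> 'b::{second_countable_topology, linorder_topology}"
  shows "f \<in> borel_measurable N \<Longrightarrow> g \<in> borel_measurable N \<Longrightarrow> Measurable.pred N (\<lambda>x. f x \<le> g x)"
  unfolding pred_def by (rule borel_measurable_le)

lemma pred_eq_meas:
  fixes f g :: "'a \<Rightarrow> 'b::{second_countable_topology, linorder_topology}"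
  shows "f \<in> borel_measurable N \<Longrightarrow> g \<in> borel_measurable N \<Longrightarrow> Measurable.pred N (\<lambda>x. f x = g x)"
  unfolding pred_def by (rule borel_measurable_eq)

lemma pred_bex_finite:
  assumes "finite S" "\<And>m. m \<in> S \<Longrightarrow> Measurable.pred N (Q m)"
  shows "Measurable.pred N (\<lambda>x. \<exists>m\<in>S. Q m x)"
proof -
  have "{x\<in>space N. \<exists>m\<in>S. Q m x} = (\<Union>m\<in>S. {x\<in>space N. Q m x})" by auto
  also have "\<dots> \<in> sets N" using assms by (intro sets.finite_UN) (auto simp: pred_def)
  finally show ?thesis unfolding pred_def .
qed

lemma pred_conj: "Measurable.pred N A \<Longrightarrow> Measurable.pred N B \<Longrightarrow> Measurable.pred N (\<lambda>x. A x \<and> B x)"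
  unfolding pred_def
proof -
  assume "{x\<in>space N. A x} \<in> sets N" "{x\<in>space N. B x} \<in> sets N"
  then have "{x\<in>space N. A x} \<inter> {x\<in>space N. B x} \<in> sets N" by blast
  moreover have "{x\<in>space N. A x \<and> B x} = {x\<in>space N. A x} \<inter> {x\<in>space N. B x}" by auto
  ultimately show "{x\<in>space N. A x \<and> B x} \<in> sets N" by simp
qed

lemma pred_disj: "Measurable.pred N A \<Longrightarrow> Measurable.pred N B \<Longrightarrow> Measurable.pred N (\<lambda>x. A x \<or> B x)"
  unfolding pred_def
proof -
  assume "{x\<in>space N. A x} \<in> sets N" "{x\<in>space N. B x} \<in> sets N"
  then have "{x\<in>space N. A x} \<union> {x\<in>space N. B x} \<in> sets N" by blast
  moreover have "{x\<in>space N. A x \<or> B x} = {x\<in>space N. A x} \<union> {x\<in>space N. B x}" by auto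
  ultimately show "{x\<in>space N. A x \<or> B x} \<in> sets N" by simp
qed

lemma pred_not: "Measurable.pred N A \<Longrightarrow> Measurable.pred N (\<lambda>x. \<not> A x)"
  unfolding pred_def
proof -
  assume "{x\<in>space N. A x} \<in> sets N"
  then have "space N - {x\<in>space N. A x} \<in> sets N" by blast
  moreover have "{x\<in>space N. \<not> A x} = space N - {x\<in>space N. A x}" by auto
  ultimately show "{x\<in>space N. \<not> A x} \<in> sets N" by simp
qed

lemma comp_meas: assumes j: "j \<in> J" shows "(\<lambda>\<omega>. V (\<omega> j)) \<in> borel_measurable PP"
proof -
  have eq: "measurable P borel = measurable borel (borel::real measure)" by (rule measurable_cong_sets[OF sP refl])
  have V': "V \<in> borel_measurable P" unfolding eq by (rule Vm)
  have "(\<lambda>\<omega>. \<omega> j) \<in> measurable PP P" using measurable_component_singleton[OF j, of "\<lambda>_. P"] by simp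
  then show ?thesis using V' by (rule measurable_compose)
qed

lemma ecomp_meas: "j \<in> J \<Longrightarrow> (\<lambda>\<omega>. ereal (V (\<omega> j))) \<in> borel_measurable PP"
  using comp_meas by (rule borel_measurable_ereal)

lemma pH_meas: assumes "i \<in> J" "j \<in> J" shows "(\<lambda>\<omega>. pH H n \<omega> i j) \<in> borel_measurable PP"
  unfolding pH_def using Hmeas assms by (intro borel_measurable_divide borel_measurable_sum) auto

lemma Fq_meas: assumes "a \<le> 1" "k \<in> J" shows "(\<lambda>\<omega>. Fq a \<omega> k) \<in> borel_measurable PP"
  unfolding Fq_def
proof (rule Qf_meas)
  show "\<forall>x\<in>space PP. \<forall>j\<in>J. 0 \<le> pH H n x k j" using pH_nonneg by blast
  show "\<forall>x\<in>space PP. a \<le> sum (pH H n x k) J" using pH_sum[OF assms(2)] assms(1) by simp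
qed (use pH_meas ecomp_meas assms in auto)

lemma card_meas:
  assumes "finite S" "\<And>k. k \<in> S \<Longrightarrow> Measurable.pred N (Q k)"
  shows "(\<lambda>x. real (card {k\<in>S. Q k x})) \<in> borel_measurable N"
proof -
  have "(\<lambda>x. \<Sum>k\<in>S. if Q k x then 1 else 0::real) \<in> borel_measurable N"
  proof (rule borel_measurable_sum)
    fix k assume "k \<in> S"
    show "(\<lambda>x. if Q k x then 1 else 0::real) \<in> borel_measurable N"
      by (rule measurable_If[OF borel_measurable_const borel_measurable_const predE[OF assms(2)[OF \<open>k\<in>S\<close>]]])
  qed
  then show ?thesis using card_filter_real[OF assms(1)] by simp
qed

lemma good_meas: assumes "a \<le> 1" shows "Measurable.pred PP (good a)"
proof -
  have "(\<lambda>\<omega>. real (cnt a \<omega>)) \<in> borel_measurable PP"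
    unfolding cnt_def
  proof (rule card_meas)
    fix k assume k: "k \<in> J"
    show "Measurable.pred PP (\<lambda>x. ereal (V (x k)) \<le> Fq a x k)"
      by (rule pred_le_meas[OF ecomp_meas[OF k] Fq_meas[OF assms k]])
  qed simp
  then have "Measurable.pred PP (\<lambda>\<omega>. \<alpha> * real (n+1) \<le> real (cnt a \<omega>))"
    by (intro pred_le_meas borel_measurable_const)
  then show ?thesis unfolding good_def[abs_def] .
qed

lemma vbar_meas: assumes "a \<le> 1" shows "(\<lambda>\<omega>. vbar H V n \<omega> a) \<in> borel_measurable PP"
  unfolding vbar_def
proof (rule Qf_meas)
  have nJ: "n+1 \<in> J" by simp
  show "\<forall>x\<in>space PP. \<forall>j\<in>J. 0 \<le> pH H n x (n+1) j" using pH_nonneg by blast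
  show "\<forall>x\<in>space PP. a \<le> sum (pH H n x (n+1)) J" using pH_sum[OF nJ] assms(1) by simp
  show "(\<lambda>x. pH H n x (n+1) j) \<in> borel_measurable PP" if "j \<in> J" for j using pH_meas nJ that by blast
  show "(\<lambda>x. if j = n+1 then \<infinity> else ereal (V (x j))) \<in> borel_measurable PP" if "j \<in> J" for j
    using ecomp_meas[OF that] by (cases "j = n+1") simp_all
qed simp

lemma v1_meas: assumes "a \<le> 1" "i \<in> J" shows "(\<lambda>\<omega>. v1 H V n \<omega> a i) \<in> borel_measurable PP"
  unfolding v1_def
proof (rule Qf_meas)
  show "\<forall>x\<in>space PP. \<forall>j\<in>J. 0 \<le> pH H n x i j" using pH_nonneg by blast
  show "\<forall>x\<in>space PP. a \<le> sum (pH H n x i) J" using pH_sum[OF assms(2)] assms(1) by simp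
  show "(\<lambda>x. pH H n x i j) \<in> borel_measurable PP" if "j \<in> J" for j using pH_meas assms that by blast
  show "(\<lambda>x. if j = n+1 then vbar H V n x a else ereal (V (x j))) \<in> borel_measurable PP" if "j \<in> J" for j
    using ecomp_meas[OF that] vbar_meas[OF assms(1)] by (cases "j = n+1") simp_all
qed simp

lemma v2_meas: assumes "a \<le> 1" "i \<in> J" shows "(\<lambda>\<omega>. v2 H V n \<omega> a i) \<in> borel_measurable PP"
  unfolding v2_def
proof (rule Qf_meas)
  show "\<forall>x\<in>space PP. \<forall>j\<in>J. 0 \<le> pH H n x i j" using pH_nonneg by blast
  show "\<forall>x\<in>space PP. a \<le> sum (pH H n x i) J" using pH_sum[OF assms(2)] assms(1) by simp
  show "(\<lambda>x. pH H n x i j) \<in> borel_measurable PP" if "j \<in> J" for j using pH_meas assms that by blast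
  show "(\<lambda>x. if j = n+1 then 0 else ereal (V (x j))) \<in> borel_measurable PP" if "j \<in> J" for j
    using ecomp_meas[OF that] by (cases "j = n+1") simp_all
qed simp

lemma adm_meas: assumes "a \<le> 1" shows "Measurable.pred PP (\<lambda>\<omega>. admissible H V n \<alpha> \<omega> a)"
proof -
  have c1: "(\<lambda>\<omega>. real (card {i\<in>{1..n}. ereal (V (\<omega> i)) \<le> v1 H V n \<omega> a i})) \<in> borel_measurable PP"
  proof (rule card_meas)
    fix k assume k: "k \<in> {1..n}"
    then have k': "k \<in> J" by simp
    show "Measurable.pred PP (\<lambda>x. ereal (V (x k)) \<le> v1 H V n x a k)"
      by (rule pred_le_meas[OF ecomp_meas[OF k'] v1_meas[OF assms k']])
  qed simp
  have c2: "(\<lambda>\<omega>. real (card {i\<in>{1..n}. ereal (V (\<omega> i)) \<le> v2 H V n \<omega> a i})) \<in> borel_measurable PP"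
  proof (rule card_meas)
    fix k assume k: "k \<in> {1..n}"
    then have k': "k \<in> J" by simp
    show "Measurable.pred PP (\<lambda>x. ereal (V (x k)) \<le> v2 H V n x a k)"
      by (rule pred_le_meas[OF ecomp_meas[OF k'] v2_meas[OF assms k']])
  qed simp
  have p1: "Measurable.pred PP (\<lambda>\<omega>. vbar H V n \<omega> a = \<infinity>)"
    by (rule pred_eq_meas[OF vbar_meas[OF assms] borel_measurable_const])
  have p2: "Measurable.pred PP (\<lambda>\<omega>. \<alpha> \<le> real (card {i\<in>{1..n}. ereal (V (\<omega> i)) \<le> v1 H V n \<omega> a i}) / real (n+1))"
    by (intro pred_le_meas borel_measurable_const borel_measurable_divide c1)
  have p3: "Measurable.pred PP (\<lambda>\<omega>. \<alpha> \<le> real (card {i\<in>{1..n}. ereal (V (\<omega> i)) \<le> v2 H V n \<omega> a i}) / real (n+1) + 1 / real (n+1))"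
    by (intro pred_le_meas borel_measurable_const borel_measurable_divide borel_measurable_add c2)
  show ?thesis unfolding admissible_def G2_def by (intro pred_disj pred_conj p1 p2 p3)
qed

lemma Lg_meas: "Lg \<in> measurable PP (count_space UNIV)"
  unfolding Lg_def[abs_def]
proof (rule measurable_Least)
  fix i
  show "Measurable.pred PP (\<lambda>x. i \<in> {1..M} \<and> good (agrid i) x)"
  proof (cases "i \<in> {1..M}")
    case True
    have "(\<lambda>x. i \<in> {1..M} \<and> good (agrid i) x) = good (agrid i)" using True by auto
    then show ?thesis using good_meas[OF grid(2)[OF True]] by (simp only:)
  next
    case False
    then have "(\<lambda>x. i \<in> {1..M} \<and> good (agrid i) x) = (\<lambda>x. False)" by auto
    then show ?thesis by (simp add: pred_def)
  qed
qed

lemma exg_meas: "Measurable.pred PP exg"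
  unfolding exg_def[abs_def]
proof (rule pred_bex_finite)
  fix m assume m: "m \<in> {1..M}"
  show "Measurable.pred PP (good (agrid m))" by (rule good_meas[OF grid(2)[OF m]])
qed simp

lemma Gi_sets: assumes k: "k \<in> J" shows "{\<omega>\<in>space PP. Gi \<omega> k} \<in> sets PP"
proof -
  have eq: "Gi \<omega> k \<longleftrightarrow> \<not> exg \<omega> \<or> (\<exists>m\<in>{1..M}. Lg \<omega> = m \<and> ereal (V (\<omega> k)) \<le> Fq (agrid m) \<omega> k)" for \<omega>
  proof -
    have "exg \<omega> \<Longrightarrow> Lg \<omega> \<in> {1..M}"
      unfolding exg_def Lg_def by (metis (mono_tags, lifting) LeastI)
    then show ?thesis unfolding Gi_def by auto
  qed
  have Lm: "Measurable.pred PP (\<lambda>\<omega>. Lg \<omega> = m)" for m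
  proof -
    have "{x\<in>space PP. Lg x = m} = Lg -` {m} \<inter> space PP" by auto
    then show ?thesis unfolding pred_def using measurable_sets[OF Lg_meas, of "{m}"] by simp
  qed
  have "Measurable.pred PP (\<lambda>\<omega>. \<not> exg \<omega> \<or> (\<exists>m\<in>{1..M}. Lg \<omega> = m \<and> ereal (V (\<omega> k)) \<le> Fq (agrid m) \<omega> k))"
  proof (intro pred_disj pred_not exg_meas pred_bex_finite)
    fix m assume m: "m \<in> {1..M}"
    show "Measurable.pred PP (\<lambda>\<omega>. Lg \<omega> = m \<and> ereal (V (\<omega> k)) \<le> Fq (agrid m) \<omega> k)"
      by (intro pred_conj Lm pred_le_meas ecomp_meas Fq_meas grid(2) m k)
  qed simp
  then show ?thesis unfolding eq[symmetric] pred_def .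
qed


lemma L0_meas: "(\<lambda>\<omega>. LEAST m. m \<in> {1..M} \<and> admissible H V n \<alpha> \<omega> (agrid m)) \<in> measurable PP (count_space UNIV)"
proof (rule measurable_Least)
  fix i
  show "Measurable.pred PP (\<lambda>x. i \<in> {1..M} \<and> admissible H V n \<alpha> x (agrid i))"
  proof (cases "i \<in> {1..M}")
    case True
    have "(\<lambda>x. i \<in> {1..M} \<and> admissible H V n \<alpha> x (agrid i)) = (\<lambda>x. admissible H V n \<alpha> x (agrid i))" using True by auto
    then show ?thesis using adm_meas[OF grid(2)[OF True]] by (simp only:)
  next
    case False
    then have "(\<lambda>x. i \<in> {1..M} \<and> admissible H V n \<alpha> x (agrid i)) = (\<lambda>x. False)" by auto
    then show ?thesis by (simp add: pred_def)
  qed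
qed

lemma E_sets: "{\<omega>\<in>space PP. snd (\<omega> (n+1)) \<in> conf_set H V n \<alpha> agrid M \<omega>} \<in> sets PP"
proof -
  define L0 where "L0 \<omega> = (LEAST m. m \<in> {1..M} \<and> admissible H V n \<alpha> \<omega> (agrid m))" for \<omega>
  have L0m: "L0 \<in> measurable PP (count_space UNIV)" unfolding L0_def[abs_def] by (rule L0_meas)
  have Lm: "Measurable.pred PP (\<lambda>\<omega>. L0 \<omega> = m)" for m
  proof -
    have "{x\<in>space PP. L0 x = m} = L0 -` {m} \<inter> space PP" by auto
    then show ?thesis unfolding pred_def using measurable_sets[OF L0m, of "{m}"] by simp
  qed
  have eq: "{\<omega>\<in>space PP. snd (\<omega> (n+1)) \<in> conf_set H V n \<alpha> agrid M \<omega>}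
      = {\<omega>\<in>space PP. \<exists>m\<in>{1..M}. L0 \<omega> = m \<and> ereal (V (\<omega> (n+1))) \<le> vbar H V n \<omega> (agrid m)}"
  proof (rule Collect_cong, rule conj_cong[OF refl])
    fix \<omega> assume \<omega>: "\<omega> \<in> space PP"
    have ex0: "\<exists>m. m \<in> {1..M} \<and> admissible H V n \<alpha> \<omega> (agrid m)" using adm \<omega> by blast
    have "L0 \<omega> \<in> {1..M} \<and> admissible H V n \<alpha> \<omega> (agrid (L0 \<omega>))"
      unfolding L0_def using ex0 by (rule LeastI_ex)
    then have L: "L0 \<omega> \<in> {1..M}" by simp
    have "snd (\<omega> (n+1)) \<in> conf_set H V n \<alpha> agrid M \<omega> \<longleftrightarrow> ereal (V (\<omega> (n+1))) \<le> vbar H V n \<omega> (agrid (L0 \<omega>))"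
      unfolding conf_set_def alpha_tilde_def L0_def by simp
    then show "snd (\<omega> (n+1)) \<in> conf_set H V n \<alpha> agrid M \<omega> \<longleftrightarrow>
      (\<exists>m\<in>{1..M}. L0 \<omega> = m \<and> ereal (V (\<omega> (n+1))) \<le> vbar H V n \<omega> (agrid m))"
      using L by auto
  qed
  have "Measurable.pred PP (\<lambda>\<omega>. \<exists>m\<in>{1..M}. L0 \<omega> = m \<and> ereal (V (\<omega> (n+1))) \<le> vbar H V n \<omega> (agrid m))"
  proof (rule pred_bex_finite)
    fix m assume m: "m \<in> {1..M}"
    have nJ: "n+1 \<in> J" by simp
    show "Measurable.pred PP (\<lambda>\<omega>. L0 \<omega> = m \<and> ereal (V (\<omega> (n+1))) \<le> vbar H V n \<omega> (agrid m))"
      by (intro pred_conj Lm pred_le_meas ecomp_meas vbar_meas grid(2) m nJ)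
  qed simp
  then show ?thesis unfolding eq pred_def .
qed

lemma exch: assumes k: "k \<in> J"
  shows "measure PP {\<omega>\<in>space PP. Gi \<omega> k} = measure PP {\<omega>\<in>space PP. Gi \<omega> (n+1)}"
proof -
  define \<sigma> where "\<sigma> = Transposition.transpose k (n+1)"
  have nJ: "n+1 \<in> J" by simp
  have bij: "bij_betw \<sigma> J J" unfolding \<sigma>_def using k nJ by simp
  have inj: "inj_on \<sigma> J" and fn: "\<sigma> \<in> J \<rightarrow> J" using bij unfolding bij_betw_def by auto
  define T :: "(nat \<Rightarrow> 'x \<times> real) \<Rightarrow> nat \<Rightarrow> 'x \<times> real" where "T = (\<lambda>\<omega>. \<lambda>j\<in>J. \<omega> (\<sigma> j))"
  have Tm: "T \<in> measurable PP PP"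
    unfolding T_def
  proof (rule measurable_restrict)
    fix j assume "j \<in> J"
    then have "\<sigma> j \<in> J" using fn by auto
    then show "(\<lambda>x. x (\<sigma> j)) \<in> measurable PP P"
      using measurable_component_singleton[of "\<sigma> j" J "\<lambda>_. P"] by simp
  qed
  have D: "distr PP PP T = PP"
    using distr_PiM_reindex[of J "\<lambda>_. P" \<sigma> J] P inj fn unfolding T_def by simp
  have Gs: "{\<omega>\<in>space PP. Gi \<omega> (n+1)} \<in> sets PP" by (rule Gi_sets[OF nJ])
  have "measure PP {\<omega>\<in>space PP. Gi \<omega> (n+1)} = measure (distr PP PP T) {\<omega>\<in>space PP. Gi \<omega> (n+1)}"
    using D by simp
  also have "\<dots> = measure PP (T -` {\<omega>\<in>space PP. Gi \<omega> (n+1)} \<inter> space PP)"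
    by (rule measure_distr[OF Tm Gs])
  also have "T -` {\<omega>\<in>space PP. Gi \<omega> (n+1)} \<inter> space PP = {\<omega>\<in>space PP. Gi \<omega> k}"
  proof (rule set_eqI)
    fix \<omega>
    show "\<omega> \<in> T -` {\<omega>\<in>space PP. Gi \<omega> (n+1)} \<inter> space PP \<longleftrightarrow> \<omega> \<in> {\<omega>\<in>space PP. Gi \<omega> k}"
    proof (cases "\<omega> \<in> space PP")
      case True
      then have Ts: "T \<omega> \<in> space PP" using measurable_space[OF Tm] by blast
      have om: "\<forall>j\<in>J. T \<omega> j = \<omega> (\<sigma> j)" unfolding T_def by simp
      have "Gi (T \<omega>) (n+1) = Gi \<omega> (\<sigma> (n+1))" by (rule Gi_perm[OF bij om nJ])
      also have "\<sigma> (n+1) = k" unfolding \<sigma>_def by simp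
      finally show ?thesis using True Ts by simp
    qed simp
  qed
  finally show ?thesis by simp
qed

theorem main:
  "\<alpha> \<le> measure PP {\<omega>\<in>space PP. snd (\<omega> (n+1)) \<in> conf_set H V n \<alpha> agrid M \<omega>}"
proof -
  interpret p: prob_space PP by (rule prob_space_PiM) (use P in simp)
  define G where "G k = {\<omega>\<in>space PP. Gi \<omega> k}" for k
  define E where "E = {\<omega>\<in>space PP. snd (\<omega> (n+1)) \<in> conf_set H V n \<alpha> agrid M \<omega>}"
  have Gs: "G k \<in> sets PP" if "k \<in> J" for k unfolding G_def by (rule Gi_sets[OF that])
  have Es: "E \<in> sets PP" unfolding E_def by (rule E_sets)
  have int: "integrable PP (indicator (G k) :: _ \<Rightarrow> real)" if "k \<in> J" for k
    using Gs[OF that] p.emeasure_finite[of "G k"] by (simp add: less_top)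
  have int2: "integrable PP (\<lambda>\<omega>. \<Sum>k\<in>J. indicator (G k) \<omega> :: real)"
  proof (rule Bochner_Integration.integrable_sum)
    fix k assume "k \<in> J" then show "integrable PP (indicator (G k) :: _ \<Rightarrow> real)" by (rule int)
  qed
  have "(\<integral>\<omega>. (\<Sum>k\<in>J. indicator (G k) \<omega> :: real) \<partial>PP) = (\<Sum>k\<in>J. (\<integral>\<omega>. indicator (G k) \<omega> \<partial>PP))"
    by (rule Bochner_Integration.integral_sum) (rule int)
  also have "\<dots> = (\<Sum>k\<in>J. measure PP (G k))"
  proof (rule sum.cong[OF refl])
    fix k assume "k \<in> J"
    have "G k \<inter> space PP = G k" unfolding G_def by auto
    then show "(\<integral>\<omega>. indicator (G k) \<omega> \<partial>PP) = measure PP (G k)" by simp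
  qed
  also have "\<dots> = (\<Sum>k\<in>J. measure PP (G (n+1)))"
    unfolding G_def by (rule sum.cong[OF refl]) (rule exch)
  also have "\<dots> = real (n+1) * measure PP (G (n+1))" by simp
  finally have I: "(\<integral>\<omega>. (\<Sum>k\<in>J. indicator (G k) \<omega> :: real) \<partial>PP) = real (n+1) * measure PP (G (n+1))" .
  have "(\<integral>\<omega>. \<alpha> * real (n+1) \<partial>PP) = measure PP (space PP) *\<^sub>R (\<alpha> * real (n+1))"
    by (rule lebesgue_integral_const)
  then have "\<alpha> * real (n+1) = (\<integral>\<omega>. \<alpha> * real (n+1) \<partial>PP)" unfolding p.prob_space by simp
  also have "\<dots> \<le> (\<integral>\<omega>. (\<Sum>k\<in>J. indicator (G k) \<omega> :: real) \<partial>PP)"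
  proof (rule integral_mono[OF p.integrable_const int2])
    fix \<omega> assume "\<omega> \<in> space PP"
    then have "(\<Sum>k\<in>J. indicator (G k) \<omega> :: real) = (\<Sum>k\<in>J. if Gi \<omega> k then 1 else 0)"
      unfolding G_def by (intro sum.cong) (auto simp: indicator_def)
    also have "\<dots> = real (card {k\<in>J. Gi \<omega> k})" by (rule card_filter_real[symmetric]) simp
    finally show "\<alpha> * real (n+1) \<le> (\<Sum>k\<in>J. indicator (G k) \<omega> :: real)" using Gi_count[of \<omega>] by simp
  qed
  also have "\<dots> = real (n+1) * measure PP (G (n+1))" by (rule I)
  also have "\<dots> \<le> real (n+1) * measure PP E"
  proof (rule mult_left_mono)
    have "G (n+1) \<subseteq> E" unfolding G_def E_def using Gi_cover adm by blast
    then show "measure PP (G (n+1)) \<le> measure PP E" using Es by (rule p.finite_measure_mono)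
  qed simp
  finally show ?thesis unfolding E_def by simp
qed

end

theorem corollary2:
  fixes P :: "('x::euclidean_space \<times> real) measure"
    and V :: "'x \<times> real \<Rightarrow> real"
    and H :: "'x \<Rightarrow> 'x \<Rightarrow> 'x multiset \<Rightarrow> real"
    and n M :: nat and \<alpha> :: real and agrid :: "nat \<Rightarrow> real"
  assumes "prob_space P" and "sets P = sets borel"
    and "V \<in> borel_measurable borel" and "\<forall>z. 0 \<le> V z"
    and "is_localizer H"
    and "\<forall>i\<in>{1..n+1}. \<forall>j\<in>{1..n+1}.
           (\<lambda>\<omega>. Hm H n \<omega> i j) \<in> borel_measurable (PiM {1..n+1} (\<lambda>_. P))"
    and "0 < \<alpha>" and "\<alpha> < 1"
    and "1 \<le> M" and "strict_mono_on {1..M} agrid" and "0 \<le> agrid 1" and "agrid M \<le> 1"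
    and "\<forall>\<omega>\<in>space (PiM {1..n+1} (\<lambda>_. P)). \<exists>m\<in>{1..M}. admissible H V n \<alpha> \<omega> (agrid m)"
  shows "\<alpha> \<le> measure (PiM {1..n+1} (\<lambda>_. P))
           {\<omega> \<in> space (PiM {1..n+1} (\<lambda>_. P)). snd (\<omega> (n+1)) \<in> conf_set H V n \<alpha> agrid M \<omega>}"
proof -
  interpret c: cp P V H n M \<alpha> agrid by (rule cp.intro) (fact assms)+
  show ?thesis by (rule c.main)
qed

end
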